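(* Let $A\subseteq(0,\infty)$ be an open interval, let $n\ge 0$ be an integer, and let $f:A\to(0,\infty)$ be $n+1$ times Bigeometrically differentiable on $A$. Then for any $x,x+h\in A$ there exists a number $\theta\in(0,1)$ such that $$f(x+h)=\prod_{i=0}^{n}\left(f^{\pi(i)}(x)\right)^{\frac{\left(\ln\left(1+\frac{h}{x}\right)\right)^{i}}{i!}}\cdot\left(f^{\pi(n+1)}(x+\theta h)\right)^{\frac{\left(\ln\left(1+\frac{h}{x}\right)\right)^{n+1}}{(n+1)!}}.$$
   Context: For a positive differentiable function $g$, the Bigeometric derivative is $g^{\pi}(x)=\lim_{h\to0}\bigl(g((1+h)x)/g(x)\bigr)^{1/h}=\exp\{x\,g'(x)/g(x)\}$. Higher-order Bigeometric derivatives are defined by iteration: $f^{\pi(0)}=f$, $f^{\pi(k+1)}=(f^{\pi(k)})^{\pi}$; "$n+1$ times Bigeometrically differentiable" means these exist up to order $n+1$. *)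

theory Defs
  imports "HOL-Analysis.Analysis"
begin

definition bigeo_deriv :: "(real \<Rightarrow> real) \<Rightarrow> real \<Rightarrow> real" where
  "bigeo_deriv g x = Lim (at 0) (\<lambda>h. (g ((1 + h) * x) / g x) powr (1 / h))"

fun bigeo_iter :: "(real \<Rightarrow> real) \<Rightarrow> nat \<Rightarrow> real \<Rightarrow> real" where
  "bigeo_iter f 0 = f"
| "bigeo_iter f (Suc k) = bigeo_deriv (bigeo_iter f k)"

text \<open>f is m times Bigeometrically differentiable on A: for every k < m the function
  f^pi(k) is positive and differentiable at each point of A (so f^pi(k+1) exists there).\<close>
definition bigeo_differentiable_on :: "nat \<Rightarrow> (real \<Rightarrow> real) \<Rightarrow> real set \<Rightarrow> bool" where
  "bigeo_differentiable_on m f A \<longleftrightarrow>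
     (\<forall>k<m. \<forall>y\<in>A. bigeo_iter f k y > 0 \<and> bigeo_iter f k differentiable (at y))"

end

theory Submission
  imports Defs
begin

lemma bigeo_deriv_eq:
  assumes gp: "g y > 0" and gd: "g differentiable (at y)"
  shows "bigeo_deriv g y = exp (y * deriv g y / g y)"
proof -
  have Dg: "(g has_real_derivative deriv g y) (at y)"
    using gd DERIV_deriv_iff_real_differentiable by blast
  define \<phi> where "\<phi> = (\<lambda>h. ln (g ((1 + h) * y)))"
  have Dlin: "((\<lambda>h. (1 + h) * y) has_real_derivative y) (at 0)"
    by (auto intro!: derivative_eq_intros)
  have Dg0: "(g has_real_derivative deriv g y) (at ((1 + 0) * y))" using Dg by simp
  have Dcomp: "((\<lambda>h. g ((1 + h) * y)) has_real_derivative deriv g y * y) (at 0)"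
    using DERIV_chain2[OF Dg0 Dlin] by simp
  have "(\<phi> has_real_derivative (1 / g y) * (deriv g y * y)) (at 0)"
  proof -
    have gp': "g ((1 + 0) * y) > 0" using gp by simp
    show ?thesis using DERIV_chain2[OF DERIV_ln[OF gp'] Dcomp] by (simp add: divide_inverse \<phi>_def)
  qed
  hence D: "(\<phi> has_real_derivative y * deriv g y / g y) (at 0)" by (simp add: field_simps)
  hence lim1: "((\<lambda>h. (\<phi> (0 + h) - \<phi> 0) / h) \<longlongrightarrow> y * deriv g y / g y) (at 0)"
    using DERIV_def by blast
  have lim2: "((\<lambda>h. exp ((\<phi> h - \<phi> 0) / h)) \<longlongrightarrow> exp (y * deriv g y / g y)) (at 0)"
    using tendsto_exp[OF lim1] by simp
  have "continuous (at 0) (\<lambda>h. g ((1 + h) * y))"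
    using DERIV_isCont[OF Dcomp] by (simp add: isCont_def continuous_at)
  hence "((\<lambda>h. g ((1 + h) * y)) \<longlongrightarrow> g y) (at 0)"
    by (simp add: continuous_at)
  hence ev: "\<forall>\<^sub>F h in at 0. g ((1 + h) * y) > 0"
    using order_tendstoD(1)[OF _ gp] by blast
  have ev2: "\<forall>\<^sub>F h in at 0. exp ((\<phi> h - \<phi> 0) / h) = (g ((1 + h) * y) / g y) powr (1 / h)"
    using ev
  proof (rule eventually_mono)
    fix h assume "g ((1 + h) * y) > 0"
    thus "exp ((\<phi> h - \<phi> 0) / h) = (g ((1 + h) * y) / g y) powr (1 / h)"
      using gp by (simp add: \<phi>_def powr_def ln_div)
  qed
  have "((\<lambda>h. (g ((1 + h) * y) / g y) powr (1 / h)) \<longlongrightarrow> exp (y * deriv g y / g y)) (at 0)"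
    using tendsto_cong[OF ev2] lim2 by simp
  thus ?thesis unfolding bigeo_deriv_def by (rule tendsto_Lim[rotated]) simp
qed

theorem theorem3:
  fixes A :: "real set" and f :: "real \<Rightarrow> real" and n :: nat and x h :: real
  assumes "open A" and "is_interval A" and "A \<subseteq> {0<..}"
    and "\<forall>y\<in>A. f y > 0"
    and "bigeo_differentiable_on (n + 1) f A"
    and "x \<in> A" and "x + h \<in> A"
  shows "\<exists>\<theta>. 0 < \<theta> \<and> \<theta> < 1 \<and>
    f (x + h) =
      (\<Prod>i\<le>n. (bigeo_iter f i x) powr ((ln (1 + h / x)) ^ i / fact i)) *
      (bigeo_iter f (n + 1) (x + \<theta> * h)) powr ((ln (1 + h / x)) ^ (n + 1) / fact (n + 1))"
proof -
  let ?G = "bigeo_iter f"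
  have bd: "\<And>k y. k < n + 1 \<Longrightarrow> y \<in> A \<Longrightarrow> ?G k y > 0 \<and> ?G k differentiable (at y)"
    using assms(5) unfolding bigeo_differentiable_on_def by blast
  have Apos: "\<And>y. y \<in> A \<Longrightarrow> y > 0" using assms(3) by auto
  have Gsuc: "\<And>k y. k < n + 1 \<Longrightarrow> y \<in> A \<Longrightarrow> ?G (Suc k) y = exp (y * deriv (?G k) y / ?G k y)"
    using bd bigeo_deriv_eq by simp
  have pos: "\<And>k y. k \<le> n + 1 \<Longrightarrow> y \<in> A \<Longrightarrow> ?G k y > 0"
  proof -
    fix k y assume k: "k \<le> n + 1" and y: "y \<in> A"
    show "?G k y > 0"
    proof (cases "k < n + 1")
      case True thus ?thesis using bd y by blast
    next
      case False
      hence "k = Suc n" using k by simp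
      thus ?thesis using Gsuc[of n y] y by simp
    qed
  qed
  have x0: "x > 0" and xh0: "x + h > 0" using Apos assms(6,7) by auto
  have sdef: "ln (1 + h / x) = ln (x + h) - ln x"
  proof -
    have "1 + h / x = (x + h) / x" using x0 by (simp add: field_simps)
    thus ?thesis using x0 xh0 by (simp add: ln_div)
  qed
  show ?thesis
  proof (cases "h = 0")
    case True
    have "(\<Prod>i\<le>n. ?G i x powr (0 ^ i / fact i)) = f x"
    proof -
      have "(\<Prod>i\<le>n. ?G i x powr (0 ^ i / fact i)) = (\<Prod>i\<le>n. if i = 0 then f x else 1)"
      proof (rule prod.cong[OF refl])
        fix i assume "i \<in> {..n}"
        hence "?G i x > 0" using pos assms(6) by simp
        moreover have "f x > 0" using assms(4,6) by blast
        ultimately show "?G i x powr (0 ^ i / fact i) = (if i = 0 then f x else 1)" by (cases i) auto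
      qed
      also have "\<dots> = f x" by (subst prod.delta) auto
      finally show ?thesis .
    qed
    moreover have "?G (n+1) x > 0" using pos[of "n+1" x] assms(6) by simp
    ultimately show ?thesis using True by (intro exI[of _ "1/2"]) simp
  next
    case False
    define a where "a = min (ln x) (ln (x + h))"
    define b where "b = max (ln x) (ln (x + h))"
    have inA: "\<And>t. a \<le> t \<Longrightarrow> t \<le> b \<Longrightarrow> exp t \<in> A"
    proof -
      fix t assume "a \<le> t" "t \<le> b"
      hence "exp a \<le> exp t" "exp t \<le> exp b" by auto
      moreover have "exp a \<in> A" "exp b \<in> A" unfolding a_def b_def
        using x0 xh0 assms(6,7) by (auto simp: min_def max_def)
      ultimately show "exp t \<in> A" using assms(2) unfolding is_interval_1 by blast
    qed
    define diff where "diff = (\<lambda>m t. ln (?G m (exp t)))"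
    have DER: "\<forall>m t. m < n + 1 \<and> a \<le> t \<and> t \<le> b \<longrightarrow> DERIV (diff m) t :> diff (Suc m) t"
    proof (intro allI impI)
      fix m t assume H: "m < n + 1 \<and> a \<le> t \<and> t \<le> b"
      hence e: "exp t \<in> A" using inA by blast
      have gp: "?G m (exp t) > 0" and gd: "?G m differentiable (at (exp t))" using bd H e by auto
      have Dg: "(?G m has_real_derivative deriv (?G m) (exp t)) (at (exp t))"
        using gd DERIV_deriv_iff_real_differentiable by blast
      have D1: "((\<lambda>t. ?G m (exp t)) has_real_derivative deriv (?G m) (exp t) * exp t) (at t)"
        using DERIV_chain2[OF Dg DERIV_exp] .
      have D2: "((\<lambda>t. ln (?G m (exp t))) has_real_derivative (1 / ?G m (exp t)) * (deriv (?G m) (exp t) * exp t)) (at t)"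
        using DERIV_chain2[OF DERIV_ln[OF gp] D1] by (simp add: divide_inverse)
      have "diff (Suc m) t = (1 / ?G m (exp t)) * (deriv (?G m) (exp t) * exp t)"
        unfolding diff_def using Gsuc[of m "exp t"] H e by simp
      thus "DERIV (diff m) t :> diff (Suc m) t" using D2 unfolding diff_def by simp
    qed
    have "\<exists>t. (if ln (x+h) < ln x then ln (x+h) < t \<and> t < ln x else ln x < t \<and> t < ln (x+h)) \<and>
      (\<lambda>t. ln (f (exp t))) (ln (x+h)) = (\<Sum>m<n+1. diff m (ln x) / fact m * (ln (x+h) - ln x)^m)
        + diff (n+1) t / fact (n+1) * (ln (x+h) - ln x)^(n+1)"
      apply (rule Taylor[where diff=diff and a=a and b=b])
      using DER x0 xh0 False unfolding a_def b_def diff_def by auto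
    then obtain t where tI: "(if ln (x+h) < ln x then ln (x+h) < t \<and> t < ln x else ln x < t \<and> t < ln (x+h))"
      and tE: "ln (f (x + h)) = (\<Sum>m<n+1. diff m (ln x) / fact m * (ln (x+h) - ln x)^m)
        + diff (n+1) t / fact (n+1) * (ln (x+h) - ln x)^(n+1)"
      using x0 xh0 by auto
    define \<theta> where "\<theta> = (exp t - x) / h"
    have th: "0 < \<theta> \<and> \<theta> < 1 \<and> x + \<theta> * h = exp t"
    proof (cases "h > 0")
      case True
      hence "ln x < ln (x+h)" using x0 by simp
      hence "ln x < t \<and> t < ln (x+h)" using tI by auto
      hence "exp (ln x) < exp t \<and> exp t < exp (ln (x+h))" by auto
      hence "x < exp t \<and> exp t < x + h" using x0 xh0 by simp
      thus ?thesis using True unfolding \<theta>_def by (simp add: field_simps)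
    next
      case F: False
      hence hn: "h < 0" using \<open>h \<noteq> 0\<close> by simp
      hence "ln (x+h) < ln x" using x0 xh0 by simp
      hence "ln (x+h) < t \<and> t < ln x" using tI by auto
      hence "exp (ln (x+h)) < exp t \<and> exp t < exp (ln x)" by auto
      hence "x + h < exp t \<and> exp t < x" using x0 xh0 by simp
      thus ?thesis using hn unfolding \<theta>_def by (simp add: field_simps)
    qed
    have eA: "exp t \<in> A"
      using th inA[of t] tI unfolding a_def b_def by (auto split: if_splits)
    let ?s = "ln (1 + h / x)"
    have "f (x + h) = exp (ln (f (x + h)))" using assms(4,7) by simp
    also have "\<dots> = (\<Prod>m<n+1. exp (diff m (ln x) / fact m * ?s^m)) * exp (diff (n+1) t / fact (n+1) * ?s^(n+1))"
      unfolding tE sdef by (simp add: exp_add exp_sum)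
    also have "(\<Prod>m<n+1. exp (diff m (ln x) / fact m * ?s^m)) = (\<Prod>i\<le>n. ?G i x powr (?s ^ i / fact i))"
    proof -
      have "(\<Prod>m<n+1. exp (diff m (ln x) / fact m * ?s^m)) = (\<Prod>i\<le>n. exp (diff i (ln x) / fact i * ?s^i))"
        by (simp add: lessThan_Suc_atMost)
      also have "\<dots> = (\<Prod>i\<le>n. ?G i x powr (?s ^ i / fact i))"
      proof (rule prod.cong[OF refl])
        fix i assume "i \<in> {..n}"
        hence "?G i x > 0" using pos assms(6) by simp
        thus "exp (diff i (ln x) / fact i * ?s^i) = ?G i x powr (?s ^ i / fact i)"
          unfolding diff_def using x0 by (simp add: powr_def)
      qed
      finally show ?thesis .
    qed
    also have "exp (diff (n+1) t / fact (n+1) * ?s^(n+1)) = ?G (n+1) (x + \<theta> * h) powr (?s ^ (n+1) / fact (n+1))"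
    proof -
      have "?G (n+1) (exp t) > 0" using pos[of "n+1" "exp t"] eA by simp
      thus ?thesis using th unfolding diff_def by (simp add: powr_def)
    qed
    finally show ?thesis using th by blast
  qed
qed

end
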